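(* Let $A, C, D$ be binary random variables, with $A$ taking values $a,\overline{a}$, $C$ taking values $c,\overline{c}$, $D$ taking values $d,\overline{d}$, and let $Y$ be a real random variable with finite expectation. Suppose the joint distribution factorizes as \[ p(A,C,D,Y)=p(C)\,p(D\mid C)\,p(A\mid C)\,p(Y\mid A,C), \] and that every event $\{A=x, C=y, D=z\}$ has positive probability. Let $p(c)=0.5$ and $p(a\mid c)=p(\overline{a}\mid\overline{c})=p(d\mid c)=p(\overline{d}\mid\overline{c})\ge 0.5$. If \[ E[Y|a,c]-E[Y|a,\overline{c}]\ \le\ E[Y|\overline{a},\overline{c}]-E[Y|\overline{a},c]\ \le\ 0, \] then $RD_{crude}\le RD_{obs}\le RD_{true}$.
   Context: $RD_{true}=E[Y|a,c]p(c)+E[Y|a,\overline{c}]p(\overline{c})-E[Y|\overline{a},c]p(c)-E[Y|\overline{a},\overline{c}]p(\overline{c})$; $RD_{crude}=E[Y|a]-E[Y|\overline{a}]$; $RD_{obs}=E[Y|a,d]p(d)+E[Y|a,\overline{d}]p(\overline{d})-E[Y|\overline{a},d]p(d)-E[Y|\overline{a},\overline{d}]p(\overline{d})$. *)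

theory Defs
  imports "HOL-Probability.Probability"
begin

text \<open>Binary random variables are boolean-valued functions on the sample space;
  value True stands for a (resp. c, d), False for the barred value.\<close>

definition Pr :: "'s measure \<Rightarrow> ('s \<Rightarrow> bool) \<Rightarrow> real" where
  "Pr M P = measure M {\<omega> \<in> space M. P \<omega>}"

definition cPr :: "'s measure \<Rightarrow> ('s \<Rightarrow> bool) \<Rightarrow> ('s \<Rightarrow> bool) \<Rightarrow> real" where
  "cPr M P Q = Pr M (\<lambda>\<omega>. P \<omega> \<and> Q \<omega>) / Pr M Q"

definition cE :: "'s measure \<Rightarrow> ('s \<Rightarrow> real) \<Rightarrow> ('s \<Rightarrow> bool) \<Rightarrow> real" where
  "cE M Y Q = (\<integral>\<omega>. indicator {\<omega> \<in> space M. Q \<omega>} \<omega> * Y \<omega> \<partial>M) / Pr M Q"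

definition E2 :: "'s measure \<Rightarrow> ('s \<Rightarrow> real) \<Rightarrow> ('s \<Rightarrow> bool) \<Rightarrow> bool \<Rightarrow> ('s \<Rightarrow> bool) \<Rightarrow> bool \<Rightarrow> real" where
  "E2 M Y A x V v = cE M Y (\<lambda>\<omega>. A \<omega> = x \<and> V \<omega> = v)"

definition RD_true :: "'s measure \<Rightarrow> ('s \<Rightarrow> bool) \<Rightarrow> ('s \<Rightarrow> bool) \<Rightarrow> ('s \<Rightarrow> real) \<Rightarrow> real" where
  "RD_true M A C Y =
     E2 M Y A True C True * Pr M C + E2 M Y A True C False * Pr M (\<lambda>\<omega>. \<not> C \<omega>)
   - E2 M Y A False C True * Pr M C - E2 M Y A False C False * Pr M (\<lambda>\<omega>. \<not> C \<omega>)"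

definition RD_crude :: "'s measure \<Rightarrow> ('s \<Rightarrow> bool) \<Rightarrow> ('s \<Rightarrow> real) \<Rightarrow> real" where
  "RD_crude M A Y = cE M Y A - cE M Y (\<lambda>\<omega>. \<not> A \<omega>)"

definition RD_obs :: "'s measure \<Rightarrow> ('s \<Rightarrow> bool) \<Rightarrow> ('s \<Rightarrow> bool) \<Rightarrow> ('s \<Rightarrow> real) \<Rightarrow> real" where
  "RD_obs M A D Y =
     E2 M Y A True D True * Pr M D + E2 M Y A True D False * Pr M (\<lambda>\<omega>. \<not> D \<omega>)
   - E2 M Y A False D True * Pr M D - E2 M Y A False D False * Pr M (\<lambda>\<omega>. \<not> D \<omega>)"

end

theory Submission imports Defs begin

lemma int_scale:
  fixes Y :: "'s \<Rightarrow> real" and M :: "'s measure"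
  assumes fm: "finite_measure M" and S[measurable]: "S \<in> sets M" and T[measurable]: "T \<in> sets M"
    and Ym[measurable]: "Y \<in> borel_measurable M" and k: "k \<ge> 0"
    and eq: "\<And>B. B \<in> sets borel \<Longrightarrow> measure M (S \<inter> Y -` B) = k * measure M (T \<inter> Y -` B)"
  shows "(\<integral>\<omega>. indicator S \<omega> * Y \<omega> \<partial>M) = k * (\<integral>\<omega>. indicator T \<omega> * Y \<omega> \<partial>M)"
proof -
  interpret finite_measure M by fact
  define NS where "NS = distr (density M (\<lambda>x. ennreal (indicator S x))) borel Y"
  define NT where "NT = distr (density M (\<lambda>x. ennreal (indicator T x))) borel Y"
  have YS: "Y \<in> measurable (density M (\<lambda>x. ennreal (indicator S x))) borel"
    by (simp add: measurable_cong_sets[OF sets_density refl])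
  have YT: "Y \<in> measurable (density M (\<lambda>x. ennreal (indicator T x))) borel"
    by (simp add: measurable_cong_sets[OF sets_density refl])
  have dS: "density M (\<lambda>x. ennreal (indicator S x)) = density M (indicator S)"
    by (rule density_cong) (auto split: split_indicator)
  have dT: "density M (\<lambda>x. ennreal (indicator T x)) = density M (indicator T)"
    by (rule density_cong) (auto split: split_indicator)
  have Ssub: "S \<subseteq> space M" "T \<subseteq> space M" using S T sets.sets_into_space by blast+
  have NSeq: "NS = density NT (\<lambda>_. ennreal k)"
  proof (rule measure_eqI)
    show "sets NS = sets (density NT (\<lambda>_. ennreal k))" by (simp add: NS_def NT_def)
    fix B assume "B \<in> sets NS"
    hence B[measurable]: "B \<in> sets borel" by (simp add: NS_def)
    have YB: "Y -` B \<inter> space M \<in> sets M" by measurable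
    have e1: "S \<inter> (Y -` B \<inter> space M) = S \<inter> Y -` B" "T \<inter> (Y -` B \<inter> space M) = T \<inter> Y -` B"
      using Ssub by blast+
    have "emeasure NS B = emeasure M (S \<inter> (Y -` B \<inter> space M))"
      unfolding NS_def using YS B YB
      by (simp add: emeasure_distr dS emeasure_restricted S)
    also have "\<dots> = ennreal (measure M (S \<inter> Y -` B))"
      by (simp add: emeasure_eq_measure e1)
    also have "\<dots> = ennreal k * ennreal (measure M (T \<inter> Y -` B))"
      using eq[OF B] k by (simp add: ennreal_mult)
    also have "ennreal (measure M (T \<inter> Y -` B)) = emeasure NT B"
      unfolding NT_def using YT B YB Ssub
      by (simp add: emeasure_distr dT emeasure_restricted T emeasure_eq_measure e1)
    also have "ennreal k * emeasure NT B = emeasure (density NT (\<lambda>_. ennreal k)) B"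
      using B by (simp add: emeasure_density_const NT_def)
    finally show "emeasure NS B = emeasure (density NT (\<lambda>_. ennreal k)) B" .
  qed
  have "(\<integral>\<omega>. indicator S \<omega> * Y \<omega> \<partial>M) = (\<integral>x. x \<partial>NS)"
    unfolding NS_def using S
    by (simp add: integral_distr[OF YS] integral_density)
  also have "\<dots> = (\<integral>x. k * x \<partial>NT)"
    unfolding NSeq using k by (simp add: integral_density NT_def)
  also have "\<dots> = k * (\<integral>x. x \<partial>NT)" by simp
  also have "(\<integral>x. x \<partial>NT) = (\<integral>\<omega>. indicator T \<omega> * Y \<omega> \<partial>M)"
    unfolding NT_def using T
    by (simp add: integral_distr[OF YT] integral_density)
  finally show ?thesis .
qed

lemma alg:
  fixes q e11 e10 e01 e00 :: real
  assumes "1/2 \<le> q" "q < 1" "e11 - e10 \<le> e00 - e01"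
  defines "w \<equiv> q*q + (1-q)*(1-q)"
  shows "(e11*q + e10*(1-q)) - (e01*(1-q) + e00*q)
     \<le> (q*q*e11 + (1-q)*(1-q)*e10)/w * (1/2) + (e11+e10)/2 * (1/2) - (e01+e00)/2 * (1/2) - ((1-q)*(1-q)*e01 + q*q*e00)/w * (1/2)
   \<and> (q*q*e11 + (1-q)*(1-q)*e10)/w * (1/2) + (e11+e10)/2 * (1/2) - (e01+e00)/2 * (1/2) - ((1-q)*(1-q)*e01 + q*q*e00)/w * (1/2)
     \<le> e11/2 + e10/2 - e01/2 - e00/2"
proof -
  define XX where "XX = (2*q-1)*((e11-e10)-(e00-e01))"
  have XX: "XX \<le> 0" unfolding XX_def using assms by (intro mult_nonneg_nonpos) auto
  have "w = 1/2 + 2*(q-1/2)^2" unfolding w_def by (simp add: power2_eq_square algebra_simps)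
  hence w: "w \<ge> 1/2" by simp
  have o: "(q*q*e11 + (1-q)*(1-q)*e10)/w * (1/2) + (e11+e10)/2 * (1/2) - (e01+e00)/2 * (1/2) - ((1-q)*(1-q)*e01 + q*q*e00)/w * (1/2)
     = (e11+e10-e01-e00)/2 + XX/(4*w)"
  proof -
    have w0: "w \<noteq> 0" using w by simp
    have a: "q*q*e11 + (1-q)*(1-q)*e10 = w*((e11+e10)/2) + (2*q-1)*(e11-e10)/2" by (simp add: w_def field_simps)
    have b: "(1-q)*(1-q)*e01 + q*q*e00 = w*((e01+e00)/2) + (2*q-1)*(e00-e01)/2" by (simp add: w_def field_simps)
    have a': "(q*q*e11 + (1-q)*(1-q)*e10)/w = (e11+e10)/2 + ((2*q-1)*(e11-e10)/2)/w"
      unfolding a using w0 by (simp add: add_divide_distrib)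
    have b': "((1-q)*(1-q)*e01 + q*q*e00)/w = (e01+e00)/2 + ((2*q-1)*(e00-e01)/2)/w"
      unfolding b using w0 by (simp add: add_divide_distrib)
    show ?thesis unfolding a' b' XX_def using w0 by (simp add: field_simps)
  qed
  have c: "(e11*q + e10*(1-q)) - (e01*(1-q) + e00*q) = (e11+e10-e01-e00)/2 + XX/2"
    unfolding XX_def by (simp add: field_simps)
  have "(-XX)/(4*w) \<le> (-XX)/2" using XX w by (intro divide_left_mono) auto
  hence "XX/2 \<le> XX/(4*w)" by simp
  moreover have "XX/(4*w) \<le> 0" using XX w by (simp add: divide_nonpos_pos)
  ultimately show ?thesis unfolding o c by (simp add: diff_divide_distrib add_divide_distrib)
qed

lemma Pr_split:
  assumes "prob_space M" "{\<omega>\<in>space M. P \<omega>} \<in> sets M" "{\<omega>\<in>space M. Q \<omega>} \<in> sets M"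
  shows "Pr M P = Pr M (\<lambda>\<omega>. P \<omega> \<and> Q \<omega>) + Pr M (\<lambda>\<omega>. P \<omega> \<and> \<not> Q \<omega>)"
proof -
  interpret prob_space M by fact
  have e: "{\<omega>\<in>space M. P \<omega>} = {\<omega>\<in>space M. P \<omega> \<and> Q \<omega>} \<union> {\<omega>\<in>space M. P \<omega> \<and> \<not> Q \<omega>}" by blast
  have s1: "{\<omega>\<in>space M. P \<omega> \<and> Q \<omega>} \<in> sets M" using assms(2,3) by (simp add: Collect_conj_eq[symmetric] sets.Int) 
  have s2: "{\<omega>\<in>space M. P \<omega> \<and> \<not> Q \<omega>} \<in> sets M"
  proof -
    have "{\<omega>\<in>space M. P \<omega> \<and> \<not> Q \<omega>} = {\<omega>\<in>space M. P \<omega>} - {\<omega>\<in>space M. Q \<omega>}" by blast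
    thus ?thesis using assms(2,3) by auto
  qed
  show ?thesis unfolding Pr_def
    by (subst e, rule finite_measure_Union[OF s1 s2]) blast
qed

lemma I_split:
  fixes Y :: "'s \<Rightarrow> real"
  assumes "prob_space M" "{\<omega>\<in>space M. P \<omega>} \<in> sets M" "{\<omega>\<in>space M. Q \<omega>} \<in> sets M"
    "integrable M Y"
  shows "(\<integral>\<omega>. indicator {\<omega>\<in>space M. P \<omega>} \<omega> * Y \<omega> \<partial>M) =
     (\<integral>\<omega>. indicator {\<omega>\<in>space M. P \<omega> \<and> Q \<omega>} \<omega> * Y \<omega> \<partial>M) +
     (\<integral>\<omega>. indicator {\<omega>\<in>space M. P \<omega> \<and> \<not> Q \<omega>} \<omega> * Y \<omega> \<partial>M)"
proof -
  have s1: "{\<omega>\<in>space M. P \<omega> \<and> Q \<omega>} \<in> sets M" using assms(2,3) by (simp add: Collect_conj_eq[symmetric] sets.Int) 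
  have s2: "{\<omega>\<in>space M. P \<omega> \<and> \<not> Q \<omega>} \<in> sets M"
  proof -
    have "{\<omega>\<in>space M. P \<omega> \<and> \<not> Q \<omega>} = {\<omega>\<in>space M. P \<omega>} - {\<omega>\<in>space M. Q \<omega>}" by blast
    thus ?thesis using assms(2,3) by auto
  qed
  have i1: "integrable M (\<lambda>\<omega>. indicator {\<omega>\<in>space M. P \<omega> \<and> Q \<omega>} \<omega> * Y \<omega>)"
    using integrable_mult_indicator[OF s1 assms(4)] by simp
  have i2: "integrable M (\<lambda>\<omega>. indicator {\<omega>\<in>space M. P \<omega> \<and> \<not> Q \<omega>} \<omega> * Y \<omega>)"
    using integrable_mult_indicator[OF s2 assms(4)] by simp
  have "(\<integral>\<omega>. indicator {\<omega>\<in>space M. P \<omega>} \<omega> * Y \<omega> \<partial>M) =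
     (\<integral>\<omega>. indicator {\<omega>\<in>space M. P \<omega> \<and> Q \<omega>} \<omega> * Y \<omega> + indicator {\<omega>\<in>space M. P \<omega> \<and> \<not> Q \<omega>} \<omega> * Y \<omega> \<partial>M)"
    by (rule Bochner_Integration.integral_cong) (auto split: split_indicator)
    also have "\<dots> = (\<integral>\<omega>. indicator {\<omega>\<in>space M. P \<omega> \<and> Q \<omega>} \<omega> * Y \<omega> \<partial>M) +
     (\<integral>\<omega>. indicator {\<omega>\<in>space M. P \<omega> \<and> \<not> Q \<omega>} \<omega> * Y \<omega> \<partial>M)"
    by (rule Bochner_Integration.integral_add[OF i1 i2])
  finally show ?thesis .
qed

theorem theorem3:
  fixes M :: "'s measure" and A C D :: "'s \<Rightarrow> bool" and Y :: "'s \<Rightarrow> real" and q :: real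
  assumes "prob_space M"
    and "A \<in> measurable M (count_space UNIV)"
    and "C \<in> measurable M (count_space UNIV)"
    and "D \<in> measurable M (count_space UNIV)"
    and "Y \<in> borel_measurable M"
    and "integrable M Y"
    and factor: "\<And>x y z B. B \<in> sets borel \<Longrightarrow>
        Pr M (\<lambda>\<omega>. A \<omega> = x \<and> C \<omega> = y \<and> D \<omega> = z \<and> Y \<omega> \<in> B)
        = Pr M (\<lambda>\<omega>. C \<omega> = y) * cPr M (\<lambda>\<omega>. D \<omega> = z) (\<lambda>\<omega>. C \<omega> = y)
          * cPr M (\<lambda>\<omega>. A \<omega> = x) (\<lambda>\<omega>. C \<omega> = y)
          * cPr M (\<lambda>\<omega>. Y \<omega> \<in> B) (\<lambda>\<omega>. A \<omega> = x \<and> C \<omega> = y)"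
    and pos: "\<And>x y z. Pr M (\<lambda>\<omega>. A \<omega> = x \<and> C \<omega> = y \<and> D \<omega> = z) > 0"
    and pc: "Pr M C = 1/2"
    and q1: "cPr M A C = q"
    and q2: "cPr M (\<lambda>\<omega>. \<not> A \<omega>) (\<lambda>\<omega>. \<not> C \<omega>) = q"
    and q3: "cPr M D C = q"
    and q4: "cPr M (\<lambda>\<omega>. \<not> D \<omega>) (\<lambda>\<omega>. \<not> C \<omega>) = q"
    and q_ge: "q \<ge> 1/2"
    and h1: "E2 M Y A True C True - E2 M Y A True C False
             \<le> E2 M Y A False C False - E2 M Y A False C True"
    and h2: "E2 M Y A False C False - E2 M Y A False C True \<le> 0"
  shows "RD_crude M A Y \<le> RD_obs M A D Y \<and> RD_obs M A D Y \<le> RD_true M A C Y"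
proof -
  interpret prob_space M by fact
  note [measurable] = assms(2-5)
  have ms: "\<And>x y z. {\<omega>\<in>space M. A \<omega> = x \<and> C \<omega> = y \<and> D \<omega> = z} \<in> sets M" by measurable
  have ms2: "\<And>x y. {\<omega>\<in>space M. A \<omega> = x \<and> C \<omega> = y} \<in> sets M" by measurable
  have msA: "\<And>x. {\<omega>\<in>space M. A \<omega> = x} \<in> sets M" by measurable
  have msC: "\<And>x. {\<omega>\<in>space M. C \<omega> = x} \<in> sets M" by measurable
  have msD: "\<And>x. {\<omega>\<in>space M. D \<omega> = x} \<in> sets M" by measurable
  have msAD: "\<And>x z. {\<omega>\<in>space M. A \<omega> = x \<and> D \<omega> = z} \<in> sets M" by measurable
  have msB: "{\<omega>\<in>space M. Y \<omega> \<in> B \<and> (A \<omega> = x \<and> C \<omega> = y)} \<in> sets M" if [measurable]: "B \<in> sets borel" for x y B by measurable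
  have PrC: "Pr M (\<lambda>\<omega>. C \<omega> = y) = 1/2" for y
  proof (cases y)
    case True thus ?thesis using pc by simp
  next
    case False
    have "{\<omega>\<in>space M. C \<omega> = False} = space M - {\<omega>\<in>space M. C \<omega>}" by auto
    moreover have "{\<omega>\<in>space M. C \<omega>} \<in> sets M" using msC[of True] by simp
    ultimately show ?thesis using pc False by (simp add: Pr_def prob_compl)
  qed
  define pa where "pa x y = (if x = y then q else 1 - q)" for x y :: bool
  have splitC: "Pr M P = Pr M (\<lambda>\<omega>. P \<omega> \<and> C \<omega>) + Pr M (\<lambda>\<omega>. P \<omega> \<and> \<not> C \<omega>)"
    if "{\<omega>\<in>space M. P \<omega>} \<in> sets M" for P
    using Pr_split[OF assms(1) that msC[of True]] by simp
  have cPrA: "cPr M (\<lambda>\<omega>. A \<omega> = x) (\<lambda>\<omega>. C \<omega> = y) = pa x y" for x y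
  proof -
    have s: "Pr M (\<lambda>\<omega>. C \<omega> = y) = Pr M (\<lambda>\<omega>. A \<omega> \<and> C \<omega> = y) + Pr M (\<lambda>\<omega>. \<not> A \<omega> \<and> C \<omega> = y)"
      using Pr_split[OF assms(1) msC[of y] msA[of True]] by (simp add: conj_commute)
    show ?thesis using q1 q2 s PrC[of y] unfolding pa_def cPr_def
      by (cases x; cases y) (auto simp: field_simps)
  qed
  have cPrD: "cPr M (\<lambda>\<omega>. D \<omega> = z) (\<lambda>\<omega>. C \<omega> = y) = pa z y" for z y
  proof -
    have s: "Pr M (\<lambda>\<omega>. C \<omega> = y) = Pr M (\<lambda>\<omega>. D \<omega> \<and> C \<omega> = y) + Pr M (\<lambda>\<omega>. \<not> D \<omega> \<and> C \<omega> = y)"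
      using Pr_split[OF assms(1) msC[of y] msD[of True]] by (simp add: conj_commute)
    show ?thesis using q3 q4 s PrC[of y] unfolding pa_def cPr_def
      by (cases z; cases y) (auto simp: field_simps)
  qed
  have PAC: "Pr M (\<lambda>\<omega>. A \<omega> = x \<and> C \<omega> = y) = 1/2 * pa x y" for x y
    using cPrA[of x y] PrC[of y] unfolding cPr_def by (simp add: field_simps)
  have PACpos: "Pr M (\<lambda>\<omega>. A \<omega> = x \<and> C \<omega> = y) > 0" for x y
  proof -
    have "Pr M (\<lambda>\<omega>. A \<omega> = x \<and> C \<omega> = y) = Pr M (\<lambda>\<omega>. A \<omega> = x \<and> C \<omega> = y \<and> D \<omega> = True)
       + Pr M (\<lambda>\<omega>. A \<omega> = x \<and> C \<omega> = y \<and> D \<omega> = False)"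
      using Pr_split[OF assms(1) ms2[of x y] msD[of True]] by simp
    thus ?thesis using pos[of x y True] pos[of x y False] by simp
  qed
  have papos: "pa x y > 0" for x y using PAC[of x y] PACpos[of x y] by simp
  have P3: "Pr M (\<lambda>\<omega>. A \<omega> = x \<and> C \<omega> = y \<and> D \<omega> = z) = 1/2 * pa z y * pa x y" for x y z
  proof -
    have "Pr M (\<lambda>\<omega>. A \<omega> = x \<and> C \<omega> = y \<and> D \<omega> = z) = Pr M (\<lambda>\<omega>. A \<omega> = x \<and> C \<omega> = y \<and> D \<omega> = z \<and> Y \<omega> \<in> UNIV)"
      by simp
    also have "\<dots> = 1/2 * pa z y * pa x y * cPr M (\<lambda>\<omega>. Y \<omega> \<in> UNIV) (\<lambda>\<omega>. A \<omega> = x \<and> C \<omega> = y)"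
      using factor[of UNIV x y z] PrC cPrA cPrD by simp
    also have "cPr M (\<lambda>\<omega>. Y \<omega> \<in> UNIV) (\<lambda>\<omega>. A \<omega> = x \<and> C \<omega> = y) = 1"
      using PACpos[of x y] unfolding cPr_def by simp
    finally show ?thesis by simp
  qed
  define I where "I P = (\<integral>\<omega>. indicator {\<omega>\<in>space M. P \<omega>} \<omega> * Y \<omega> \<partial>M)" for P
  have I3: "I (\<lambda>\<omega>. A \<omega> = x \<and> C \<omega> = y \<and> D \<omega> = z) = pa z y * I (\<lambda>\<omega>. A \<omega> = x \<and> C \<omega> = y)" for x y z
    unfolding I_def
  proof (rule int_scale[OF _ ms ms2 assms(5)])
    show "finite_measure M" by unfold_locales
    show "0 \<le> pa z y" using papos[of z y] by simp
    fix B :: "real set" assume B: "B \<in> sets borel"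
    have "measure M ({\<omega> \<in> space M. A \<omega> = x \<and> C \<omega> = y \<and> D \<omega> = z} \<inter> Y -` B)
        = Pr M (\<lambda>\<omega>. A \<omega> = x \<and> C \<omega> = y \<and> D \<omega> = z \<and> Y \<omega> \<in> B)"
      unfolding Pr_def by (rule arg_cong[where f="measure M"]) auto
    also have "\<dots> = 1/2 * pa z y * pa x y * cPr M (\<lambda>\<omega>. Y \<omega> \<in> B) (\<lambda>\<omega>. A \<omega> = x \<and> C \<omega> = y)"
      using factor[OF B, of x y z] PrC cPrA cPrD by simp
    also have "\<dots> = pa z y * Pr M (\<lambda>\<omega>. Y \<omega> \<in> B \<and> (A \<omega> = x \<and> C \<omega> = y))"
      unfolding cPr_def PAC using papos[of x y] by (simp add: field_simps)
    also have "Pr M (\<lambda>\<omega>. Y \<omega> \<in> B \<and> (A \<omega> = x \<and> C \<omega> = y)) = measure M ({\<omega> \<in> space M. A \<omega> = x \<and> C \<omega> = y} \<inter> Y -` B)"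
      unfolding Pr_def by (rule arg_cong[where f="measure M"]) auto
    finally show "measure M ({\<omega> \<in> space M. A \<omega> = x \<and> C \<omega> = y \<and> D \<omega> = z} \<inter> Y -` B) =
         pa z y * measure M ({\<omega> \<in> space M. A \<omega> = x \<and> C \<omega> = y} \<inter> Y -` B)" .
  qed
  define e where "e x y = E2 M Y A x C y" for x y
  have I2: "I (\<lambda>\<omega>. A \<omega> = x \<and> C \<omega> = y) = e x y * (1/2 * pa x y)" for x y
    using papos[of x y] unfolding e_def E2_def cE_def I_def PAC by simp
  have I3': "I (\<lambda>\<omega>. A \<omega> = x \<and> C \<omega> = y \<and> D \<omega> = z) = pa z y * (e x y * (1/2 * pa x y))" for x y z
    using I3 I2 by simp
  have splitI: "I P = I (\<lambda>\<omega>. P \<omega> \<and> C \<omega>) + I (\<lambda>\<omega>. P \<omega> \<and> \<not> C \<omega>)"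
    if "{\<omega>\<in>space M. P \<omega>} \<in> sets M" for P
    unfolding I_def using I_split[OF assms(1) that msC[of True] assms(6)] by simp
  have EAD: "E2 M Y A x D z = (pa z True * (e x True * (1/2 * pa x True)) + pa z False * (e x False * (1/2 * pa x False)))
     / (1/2 * pa z True * pa x True + 1/2 * pa z False * pa x False)" for x z
  proof -
    have i: "I (\<lambda>\<omega>. A \<omega> = x \<and> D \<omega> = z) = I (\<lambda>\<omega>. A \<omega> = x \<and> C \<omega> = True \<and> D \<omega> = z) + I (\<lambda>\<omega>. A \<omega> = x \<and> C \<omega> = False \<and> D \<omega> = z)"
      using splitI[OF msAD[of x z]] by (simp add: conj_commute conj_left_commute)
    have p: "Pr M (\<lambda>\<omega>. A \<omega> = x \<and> D \<omega> = z) = Pr M (\<lambda>\<omega>. A \<omega> = x \<and> C \<omega> = True \<and> D \<omega> = z) + Pr M (\<lambda>\<omega>. A \<omega> = x \<and> C \<omega> = False \<and> D \<omega> = z)"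
      using splitC[OF msAD[of x z]] by (simp add: conj_commute conj_left_commute)
    show ?thesis unfolding E2_def cE_def I_def[symmetric] i p I3' P3 by simp
  qed
  have PD: "Pr M (\<lambda>\<omega>. D \<omega> = z) = 1/2" for z
  proof -
    have a: "Pr M (\<lambda>\<omega>. D \<omega> = z) = Pr M (\<lambda>\<omega>. A \<omega> = True \<and> D \<omega> = z) + Pr M (\<lambda>\<omega>. A \<omega> = False \<and> D \<omega> = z)"
      using Pr_split[OF assms(1) msD[of z] msA[of True]] by (simp add: conj_commute)
    have p: "Pr M (\<lambda>\<omega>. A \<omega> = x \<and> D \<omega> = z) = Pr M (\<lambda>\<omega>. A \<omega> = x \<and> C \<omega> = True \<and> D \<omega> = z) + Pr M (\<lambda>\<omega>. A \<omega> = x \<and> C \<omega> = False \<and> D \<omega> = z)" for x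
      using splitC[OF msAD[of x z]] by (simp add: conj_commute conj_left_commute)
    show ?thesis unfolding a p P3 pa_def by (cases z) (simp_all add: field_simps)
  qed
  have EA: "cE M Y (\<lambda>\<omega>. A \<omega> = x) = e x True * pa x True + e x False * pa x False" for x
  proof -
    have i: "I (\<lambda>\<omega>. A \<omega> = x) = I (\<lambda>\<omega>. A \<omega> = x \<and> C \<omega> = True) + I (\<lambda>\<omega>. A \<omega> = x \<and> C \<omega> = False)"
      using splitI[OF msA[of x]] by simp
    have p: "Pr M (\<lambda>\<omega>. A \<omega> = x) = Pr M (\<lambda>\<omega>. A \<omega> = x \<and> C \<omega> = True) + Pr M (\<lambda>\<omega>. A \<omega> = x \<and> C \<omega> = False)"
      using splitC[OF msA[of x]] by simp
    have d: "1/2 * pa x True + 1/2 * pa x False = 1/2" unfolding pa_def by (cases x) (simp_all add: field_simps)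
    have "cE M Y (\<lambda>\<omega>. A \<omega> = x) = (e x True * (1/2 * pa x True) + e x False * (1/2 * pa x False)) / (1/2 * pa x True + 1/2 * pa x False)"
      unfolding cE_def I_def[symmetric] i p I2 PAC ..
    also have "\<dots> = e x True * pa x True + e x False * pa x False" unfolding d by (simp add: field_simps)
    finally show ?thesis .
  qed
  have q1': "q < 1" using papos[of True False] unfolding pa_def by simp
  have sp1: "0 < q*q" using q_ge by simp
  have sp2: "0 \<le> (1-q)*(1-q)" by simp
  have sp: "q*q + (1-q)*(1-q) > 0" using sp1 sp2 by linarith
  have E11: "E2 M Y A True D True = (q*q*e True True + (1-q)*(1-q)*e True False)/(q*q + (1-q)*(1-q))"
    unfolding EAD pa_def using sp by (simp add: field_simps)
  have E00: "E2 M Y A False D False = ((1-q)*(1-q)*e False True + q*q*e False False)/(q*q + (1-q)*(1-q))"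
    unfolding EAD pa_def using sp by (simp add: field_simps)
  have E10: "E2 M Y A True D False = (e True True + e True False)/2"
    unfolding EAD pa_def using q1' q_ge by (simp add: field_simps)
  have E01: "E2 M Y A False D True = (e False True + e False False)/2"
    unfolding EAD pa_def using q1' q_ge by (simp add: field_simps)
  have crude: "RD_crude M A Y = (e True True*q + e True False*(1-q)) - (e False True*(1-q) + e False False*q)"
    using EA[of True] EA[of False] unfolding RD_crude_def pa_def by simp
  have obs: "RD_obs M A D Y = (q*q*e True True + (1-q)*(1-q)*e True False)/(q*q + (1-q)*(1-q)) * (1/2) + (e True True+e True False)/2 * (1/2) - (e False True+e False False)/2 * (1/2) - ((1-q)*(1-q)*e False True + q*q*e False False)/(q*q + (1-q)*(1-q)) * (1/2)"
    proof -
    have pd1: "Pr M D = 1/2" using PD[of True] by simp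
    have pd0: "Pr M (\<lambda>\<omega>. \<not> D \<omega>) = 1/2" using PD[of False] by simp
    show ?thesis unfolding RD_obs_def E11 E00 E10 E01 pd1 pd0 by simp
  qed
  have tru: "RD_true M A C Y = e True True/2 + e True False/2 - e False True/2 - e False False/2"
    proof -
    have pc0: "Pr M (\<lambda>\<omega>. \<not> C \<omega>) = 1/2" using PrC[of False] by simp
    show ?thesis unfolding RD_true_def pc pc0 e_def by simp
  qed
  show ?thesis unfolding crude obs tru
    by (rule alg[OF q_ge q1']) (use h1 in \<open>simp add: e_def\<close>)
qed
end
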